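(* Let $B\in\mathcal A_n$. The ASMs covered by $B$ in ASM order are exactly the matrices $r_{i,i+1}^{k,k+1}(B)$ where $R_{i,i+1}^{k,k+1}$ ranges over the essential points of $B$, and distinct essential points give distinct such ASMs; thus essential points of $B$ are in bijection with the elements covered by $B$. Consequently, every covering relation $A\lessdot B$ in ASM order is an edge $A\to B$ of the ASM graph.
   Context: $\mathcal A_n$ is the set of $n\times n$ alternating sign matrices (entries in $\{-1,0,1\}$, partial row and column sums in $\{0,1\}$, full row and column sums $1$). The corner sum matrix is $\widetilde A(i,j)=\sum_{p\le i,q\le j}a_{pq}$, with $\widetilde A(i,j)=0$ if $i=0$ or $j=0$. ASM order: $A\le B$ iff $\widetilde A(i,j)\ge\widetilde B(i,j)$ for all $i,j$. For $i<j$, $k<l$ in $[n]$, $R_{ij}^{kl}=\{(p,q): i\le p<j,\ k\le q<l\}$ and $\widetilde R_{ij}^{kl}$ is its $0/1$ indicator matrix. $E(A)$ (essential rectangles): those $R_{ij}^{kl}$ with, for all $(p,q)\in R_{ij}^{kl}$, $\widetilde A(p,k)=\widetilde A(p,k-1)$, $\widetilde A(p,l)=\widetilde A(p,l-1)+1$, $\widetilde A(i,q)=\widetilde A(i-1,q)$, $\widetilde A(j,q)=\widetilde A(j-1,q)+1$. $E^*(A)$ (dual essential rectangles): those with $\widetilde A(p,k)=\widetilde A(p,k-1)+1$, $\widetilde A(p,l)=\widetilde A(p,l-1)$, $\widetilde A(i,q)=\widetilde A(i-1,q)+1$, $\widetilde A(j,q)=\widetilde A(j-1,q)$. An essential point of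 $A$ is an essential rectangle $R_{ij}^{kl}\in E(A)$ with $j=i+1$ and $l=k+1$. The operator $r_{ij}^{kl}$ sends $A$ to the ASM with corner sum matrix $\widetilde A+\widetilde R_{ij}^{kl}$ if $R_{ij}^{kl}\in E(A)$, $\widetilde A-\widetilde R_{ij}^{kl}$ if $R_{ij}^{kl}\in E^*(A)$, $\widetilde A$ otherwise. The bigrassmannian statistic is $\beta(A)=\sum_{i,j}\min(i,j)-\sum_{i,j}\widetilde A(i,j)$. ASM graph edge: $A\to B$ if $B=r_{ij}^{kl}(A)$ for some $i<j$, $k<l$ and $\beta(A)<\beta(B)$. *)

theory Defs
  imports Main
begin

text \<open>An n x n matrix is a function nat => nat => int, with rows/columns indexed by 1..n
  and all entries outside [1..n] x [1..n] equal to 0.\<close>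

definition asm :: "nat \<Rightarrow> (nat \<Rightarrow> nat \<Rightarrow> int) \<Rightarrow> bool" where
  "asm n A \<longleftrightarrow>
     (\<forall>i j. (i \<notin> {1..n} \<or> j \<notin> {1..n}) \<longrightarrow> A i j = 0) \<and>
     (\<forall>i\<in>{1..n}. \<forall>j\<in>{1..n}. A i j \<in> {-1, 0, 1}) \<and>
     (\<forall>i\<in>{1..n}. \<forall>j\<in>{1..n}. (\<Sum>q=1..j. A i q) \<in> {0, 1}) \<and>
     (\<forall>j\<in>{1..n}. \<forall>i\<in>{1..n}. (\<Sum>p=1..i. A p j) \<in> {0, 1}) \<and>
     (\<forall>i\<in>{1..n}. (\<Sum>q=1..n. A i q) = 1) \<and>
     (\<forall>j\<in>{1..n}. (\<Sum>p=1..n. A p j) = 1)"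

definition csum :: "(nat \<Rightarrow> nat \<Rightarrow> int) \<Rightarrow> nat \<Rightarrow> nat \<Rightarrow> int" where
  "csum A i j = (\<Sum>p=1..i. \<Sum>q=1..j. A p q)"

definition asm_le :: "nat \<Rightarrow> (nat \<Rightarrow> nat \<Rightarrow> int) \<Rightarrow> (nat \<Rightarrow> nat \<Rightarrow> int) \<Rightarrow> bool" where
  "asm_le n A B \<longleftrightarrow> asm n A \<and> asm n B \<and>
     (\<forall>i\<in>{0..n}. \<forall>j\<in>{0..n}. csum A i j \<ge> csum B i j)"

definition asm_covers :: "nat \<Rightarrow> (nat \<Rightarrow> nat \<Rightarrow> int) \<Rightarrow> (nat \<Rightarrow> nat \<Rightarrow> int) \<Rightarrow> bool" where
  "asm_covers n A B \<longleftrightarrow> asm_le n A B \<and> A \<noteq> B \<and>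
     \<not> (\<exists>C. asm_le n A C \<and> asm_le n C B \<and> C \<noteq> A \<and> C \<noteq> B)"

definition rect_ind :: "nat \<Rightarrow> nat \<Rightarrow> nat \<Rightarrow> nat \<Rightarrow> nat \<Rightarrow> nat \<Rightarrow> int" where
  "rect_ind i j k l p q = (if i \<le> p \<and> p < j \<and> k \<le> q \<and> q < l then 1 else 0)"

definition valid_rect :: "nat \<Rightarrow> nat \<Rightarrow> nat \<Rightarrow> nat \<Rightarrow> nat \<Rightarrow> bool" where
  "valid_rect n i j k l \<longleftrightarrow> 1 \<le> i \<and> i < j \<and> j \<le> n \<and> 1 \<le> k \<and> k < l \<and> l \<le> n"

definition ess_rect :: "nat \<Rightarrow> (nat \<Rightarrow> nat \<Rightarrow> int) \<Rightarrow> nat \<Rightarrow> nat \<Rightarrow> nat \<Rightarrow> nat \<Rightarrow> bool" where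
  "ess_rect n A i j k l \<longleftrightarrow> valid_rect n i j k l \<and>
     (\<forall>p\<in>{i..<j}. \<forall>q\<in>{k..<l}.
        csum A p k = csum A p (k - 1) \<and>
        csum A p l = csum A p (l - 1) + 1 \<and>
        csum A i q = csum A (i - 1) q \<and>
        csum A j q = csum A (j - 1) q + 1)"

definition dual_ess_rect :: "nat \<Rightarrow> (nat \<Rightarrow> nat \<Rightarrow> int) \<Rightarrow> nat \<Rightarrow> nat \<Rightarrow> nat \<Rightarrow> nat \<Rightarrow> bool" where
  "dual_ess_rect n A i j k l \<longleftrightarrow> valid_rect n i j k l \<and>
     (\<forall>p\<in>{i..<j}. \<forall>q\<in>{k..<l}.
        csum A p k = csum A p (k - 1) + 1 \<and>
        csum A p l = csum A p (l - 1) \<and>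
        csum A i q = csum A (i - 1) q + 1 \<and>
        csum A j q = csum A (j - 1) q)"

definition ess_point :: "nat \<Rightarrow> (nat \<Rightarrow> nat \<Rightarrow> int) \<Rightarrow> nat \<Rightarrow> nat \<Rightarrow> bool" where
  "ess_point n A i k \<longleftrightarrow> ess_rect n A i (Suc i) k (Suc k)"

definition rop :: "nat \<Rightarrow> nat \<Rightarrow> nat \<Rightarrow> nat \<Rightarrow> nat \<Rightarrow> (nat \<Rightarrow> nat \<Rightarrow> int) \<Rightarrow> (nat \<Rightarrow> nat \<Rightarrow> int)" where
  "rop n i j k l A =
     (if ess_rect n A i j k l then
        (THE B. asm n B \<and> (\<forall>p\<in>{0..n}. \<forall>q\<in>{0..n}. csum B p q = csum A p q + rect_ind i j k l p q))
      else if dual_ess_rect n A i j k l then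
        (THE B. asm n B \<and> (\<forall>p\<in>{0..n}. \<forall>q\<in>{0..n}. csum B p q = csum A p q - rect_ind i j k l p q))
      else A)"

definition beta :: "nat \<Rightarrow> (nat \<Rightarrow> nat \<Rightarrow> int) \<Rightarrow> int" where
  "beta n A = (\<Sum>i=1..n. \<Sum>j=1..n. int (min i j)) - (\<Sum>i=1..n. \<Sum>j=1..n. csum A i j)"

definition asm_edge :: "nat \<Rightarrow> (nat \<Rightarrow> nat \<Rightarrow> int) \<Rightarrow> (nat \<Rightarrow> nat \<Rightarrow> int) \<Rightarrow> bool" where
  "asm_edge n A B \<longleftrightarrow> asm n A \<and> asm n B \<and>
     (\<exists>i j k l. valid_rect n i j k l \<and> B = rop n i j k l A) \<and> beta n A < beta n B"

end

theory Submission
  imports Defs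
begin

definition valid :: "nat \<Rightarrow> (nat \<Rightarrow> nat \<Rightarrow> int) \<Rightarrow> bool" where
  "valid n C \<longleftrightarrow> (\<forall>j\<le>n. C 0 j = 0) \<and> (\<forall>i\<le>n. C i 0 = 0) \<and>
     (\<forall>i\<le>n. C i n = int i) \<and> (\<forall>j\<le>n. C n j = int j) \<and>
     (\<forall>i\<in>{1..n}. \<forall>j\<in>{0..n}. C i j - C (i-1) j \<in> {0,1}) \<and>
     (\<forall>i\<in>{0..n}. \<forall>j\<in>{1..n}. C i j - C i (j-1) \<in> {0,1})"

lemma csum_Suc_row: "csum A (Suc i) j = csum A i j + (\<Sum>q=1..j. A (Suc i) q)"
  unfolding csum_def by (simp add: sum.cl_ivl_Suc)

lemma csum_Suc_col: "csum A i (Suc j) = csum A i j + (\<Sum>p=1..i. A p (Suc j))"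
  unfolding csum_def by (simp add: sum.cl_ivl_Suc sum.distrib)

lemma csum_0 [simp]: "csum A 0 j = 0" "csum A i 0 = 0" by (simp_all add: csum_def)

lemma entry_csum: "A (Suc p) (Suc q) = csum A (Suc p) (Suc q) - csum A p (Suc q) - csum A (Suc p) q + csum A p q"
  by (simp add: csum_Suc_row sum.cl_ivl_Suc)

lemma row_diff: "1 \<le> i \<Longrightarrow> csum A i j - csum A (i-1) j = (\<Sum>q=1..j. A i q)"
  by (cases i) (simp_all add: csum_Suc_row)

lemma col_diff: "1 \<le> j \<Longrightarrow> csum A i j - csum A i (j-1) = (\<Sum>p=1..i. A p j)"
  by (cases j) (simp_all add: csum_Suc_col)

lemma asm_unique:
  assumes "asm n A" "asm n A'" "\<forall>p\<le>n. \<forall>q\<le>n. csum A p q = csum A' p q"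
  shows "A = A'"
proof (intro ext)
  fix p q
  show "A p q = A' p q"
  proof (cases "p \<in> {1..n} \<and> q \<in> {1..n}")
    case True
    define p' where "p' = p - 1"
    define q' where "q' = q - 1"
    have pq: "p = Suc p'" "q = Suc q'" "Suc p' \<le> n" "Suc q' \<le> n"
      using True unfolding p'_def q'_def by auto
    show ?thesis using assms(3) pq
      by (simp add: entry_csum[of A] entry_csum[of A'])
  next
    case False
    then show ?thesis using assms(1,2) unfolding asm_def by auto
  qed
qed

lemma csum_row_full: "asm n A \<Longrightarrow> i \<le> n \<Longrightarrow> csum A i n = int i"
proof (induction i)
  case 0 then show ?case by simp
next
  case (Suc i)
  then have "(\<Sum>q=1..n. A (Suc i) q) = 1" unfolding asm_def by auto
  then show ?case using Suc by (simp add: csum_Suc_row)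
qed

lemma csum_col_full: "asm n A \<Longrightarrow> j \<le> n \<Longrightarrow> csum A n j = int j"
proof (induction j)
  case 0 then show ?case by simp
next
  case (Suc j)
  then have "(\<Sum>p=1..n. A p (Suc j)) = 1" unfolding asm_def by auto
  then show ?case using Suc by (simp add: csum_Suc_col)
qed

lemma asm_valid: "asm n A \<Longrightarrow> valid n (csum A)"
  unfolding valid_def
proof (intro conjI ballI allI impI)
  fix i j assume a: "asm n A" and i: "i \<in> {1..n}" and j: "j \<in> {0..n}"
  show "csum A i j - csum A (i-1) j \<in> {0,1}"
  proof (cases "j = 0")
    case True then show ?thesis by simp
  next
    case False then show ?thesis using row_diff[of i A j] a i j unfolding asm_def by auto
  qed
next
  fix i j assume a: "asm n A" and i: "i \<in> {0..n}" and j: "j \<in> {1..n}"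
  show "csum A i j - csum A i (j-1) \<in> {0,1}"
  proof (cases "i = 0")
    case True then show ?thesis by simp
  next
    case False then show ?thesis using col_diff[of j A i] a i j unfolding asm_def by auto
  qed
qed (auto simp: csum_row_full csum_col_full)

lemma telesc: "(\<Sum>q=1..(j::nat). f q - f (q-1)) = (f j - f 0 :: int)"
  by (induction j) (simp_all add: sum.cl_ivl_Suc)

definition mk :: "nat \<Rightarrow> (nat \<Rightarrow> nat \<Rightarrow> int) \<Rightarrow> nat \<Rightarrow> nat \<Rightarrow> int" where
  "mk n C p q = (if p \<in> {1..n} \<and> q \<in> {1..n} then C p q - C (p-1) q - C p (q-1) + C (p-1) (q-1) else 0)"

lemma csum_mk: "valid n C \<Longrightarrow> p \<le> n \<Longrightarrow> q \<le> n \<Longrightarrow> csum (mk n C) p q = C p q"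
proof (induction p)
  case 0 then show ?case by (simp add: valid_def)
next
  case (Suc p)
  have "(\<Sum>q'=1..q. mk n C (Suc p) q') = (\<Sum>q'=1..q. (C (Suc p) q' - C (Suc p) (q'-1)) - (C p q' - C p (q'-1)))"
    using Suc.prems by (intro sum.cong) (auto simp: mk_def)
  also have "\<dots> = (C (Suc p) q - C (Suc p) 0) - (C p q - C p 0)"
    using telesc[of "C (Suc p)" q] telesc[of "C p" q] by (simp add: sum_subtractf)
  also have "\<dots> = C (Suc p) q - C p q" using Suc.prems by (simp add: valid_def)
  finally show ?case using Suc by (simp add: csum_Suc_row)
qed

lemma mk_asm: assumes v: "valid n C" shows "asm n (mk n C)"
  unfolding asm_def
proof (intro conjI ballI allI impI)
  fix i j assume i: "i \<in> {1..n}" and j: "j \<in> {1..n}"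
  have V: "\<forall>i\<in>{1..n}. \<forall>j\<in>{0..n}. C i j - C (i-1) j \<in> {0,1}"
    using v unfolding valid_def by blast
  have a: "C i j - C (i-1) j \<in> {0,1}" "C i (j-1) - C (i-1) (j-1) \<in> {0,1}"
    using V[rule_format, of i j] V[rule_format, of i "j-1"] i j by auto
  show "mk n C i j \<in> {-1,0,1}" using a i j by (auto simp: mk_def)
  have "(\<Sum>q=1..j. mk n C i q) = csum (mk n C) i j - csum (mk n C) (i-1) j"
    using row_diff[of i "mk n C" j] i by simp
  also have "\<dots> = C i j - C (i-1) j" using i j v csum_mk[of n C i j] csum_mk[of n C "i-1" j] by auto
  finally show "(\<Sum>q=1..j. mk n C i q) \<in> {0,1}" using a by simp
next
  fix i j assume j: "j \<in> {1..n}" and i: "i \<in> {1..n}"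
  have V: "\<forall>i\<in>{0..n}. \<forall>j\<in>{1..n}. C i j - C i (j-1) \<in> {0,1}"
    using v unfolding valid_def by blast
  have a: "C i j - C i (j-1) \<in> {0,1}"
    using V i j by auto
  have "(\<Sum>p=1..i. mk n C p j) = csum (mk n C) i j - csum (mk n C) i (j-1)"
    using col_diff[of j "mk n C" i] j by simp
  also have "\<dots> = C i j - C i (j-1)" using i j v csum_mk[of n C i j] csum_mk[of n C i "j-1"] by auto
  finally show "(\<Sum>p=1..i. mk n C p j) \<in> {0,1}" using a by simp
next
  fix i assume i: "i \<in> {1..n}"
  have "(\<Sum>q=1..n. mk n C i q) = csum (mk n C) i n - csum (mk n C) (i-1) n"
    using row_diff[of i "mk n C" n] i by simp
  also have "\<dots> = C i n - C (i-1) n" using i v csum_mk[of n C i n] csum_mk[of n C "i-1" n] by auto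
  also have "\<dots> = 1" using i v unfolding valid_def by auto
  finally show "(\<Sum>q=1..n. mk n C i q) = 1" .
next
  fix j assume j: "j \<in> {1..n}"
  have "(\<Sum>p=1..n. mk n C p j) = csum (mk n C) n j - csum (mk n C) n (j-1)"
    using col_diff[of j "mk n C" n] j by simp
  also have "\<dots> = C n j - C n (j-1)" using j v csum_mk[of n C n j] csum_mk[of n C n "j-1"] by auto
  also have "\<dots> = 1" using j v unfolding valid_def by auto
  finally show "(\<Sum>p=1..n. mk n C p j) = 1" .
qed (auto simp: mk_def)


definition pt :: "nat \<Rightarrow> nat \<Rightarrow> nat \<Rightarrow> nat \<Rightarrow> int" where
  "pt i k p q = (if p = i \<and> q = k then 1 else 0)"

lemma rect_pt: "rect_ind i (Suc i) k (Suc k) = pt i k"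
  by (auto simp: rect_ind_def pt_def intro!: ext)

lemma ess_point_iff: "ess_point n B i k \<longleftrightarrow> (1 \<le> i \<and> i < n \<and> 1 \<le> k \<and> k < n \<and>
   csum B i k = csum B i (k-1) \<and> csum B i (Suc k) = csum B i k + 1 \<and>
   csum B i k = csum B (i-1) k \<and> csum B (Suc i) k = csum B i k + 1)"
  unfolding ess_point_def ess_rect_def valid_rect_def by auto

lemma dual_point_iff: "dual_ess_rect n B i (Suc i) k (Suc k) \<longleftrightarrow> (1 \<le> i \<and> i < n \<and> 1 \<le> k \<and> k < n \<and>
   csum B i k = csum B i (k-1) + 1 \<and> csum B i (Suc k) = csum B i k \<and>
   csum B i k = csum B (i-1) k + 1 \<and> csum B (Suc i) k = csum B i k)"
  unfolding dual_ess_rect_def valid_rect_def by auto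

lemma sum_pt: "i \<in> {1..n} \<Longrightarrow> k \<in> {1..n} \<Longrightarrow> (\<Sum>p=1..n. \<Sum>q=1..n. pt i k p q) = 1"
proof -
  assume a: "i \<in> {1..n}" "k \<in> {1..n}"
  have "(\<Sum>p=1..n. \<Sum>q=1..n. pt i k p q) = (\<Sum>p=1..n. if p = i then 1 else 0)"
    using a by (intro sum.cong) (auto simp: pt_def)
  also have "\<dots> = 1" using a by simp
  finally show ?thesis .
qed

lemma valid_add:
  assumes v: "valid n C" and b: "1 \<le> i" "i < n" "1 \<le> k" "k < n"
    and e: "C i k = C i (k-1)" "C i (Suc k) = C i k + 1" "C i k = C (i-1) k" "C (Suc i) k = C i k + 1"
  shows "valid n (\<lambda>p q. C p q + pt i k p q)"
proof -
  have R: "\<forall>p\<in>{1..n}. \<forall>q\<in>{0..n}. C p q - C (p-1) q \<in> {0,1}"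
    and Cl: "\<forall>p\<in>{0..n}. \<forall>q\<in>{1..n}. C p q - C p (q-1) \<in> {0,1}"
    using v unfolding valid_def by blast+
  have R': "(C p q + pt i k p q) - (C (p-1) q + pt i k (p-1) q) \<in> {0,1}"
    if p: "p \<in> {1..n}" "q \<in> {0..n}" for p q
  proof -
    consider "p = i \<and> q = k" | "p = Suc i \<and> q = k" | "\<not> (p = i \<and> q = k) \<and> \<not> (p = Suc i \<and> q = k)" by blast
    then show ?thesis
    proof cases
      case 1 then show ?thesis using b e by (auto simp: pt_def)
    next
      case 2 then show ?thesis using b e by (auto simp: pt_def)
    next
      case 3
      then have "pt i k p q = 0" "pt i k (p-1) q = 0" using p by (auto simp: pt_def)
      then show ?thesis using R p by auto
    qed
  qed
  have C': "(C p q + pt i k p q) - (C p (q-1) + pt i k p (q-1)) \<in> {0,1}"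
    if p: "p \<in> {0..n}" "q \<in> {1..n}" for p q
  proof -
    consider "p = i \<and> q = k" | "p = i \<and> q = Suc k" | "\<not> (p = i \<and> q = k) \<and> \<not> (p = i \<and> q = Suc k)" by blast
    then show ?thesis
    proof cases
      case 1 then show ?thesis using b e by (auto simp: pt_def)
    next
      case 2 then show ?thesis using b e by (auto simp: pt_def)
    next
      case 3
      then have "pt i k p q = 0" "pt i k p (q-1) = 0" using p by (auto simp: pt_def)
      then show ?thesis using Cl p by auto
    qed
  qed
  show ?thesis unfolding valid_def
    using v b R' C' unfolding valid_def by (auto simp: pt_def)
qed

lemma find_ess:
  assumes v: "valid n C" and v': "valid n C'"
    and le: "\<forall>p\<le>n. \<forall>q\<le>n. C p q \<le> C' p q"
    and ex: "\<exists>p\<le>n. \<exists>q\<le>n. C p q < C' p q"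
  shows "\<exists>i k. 1 \<le> i \<and> i < n \<and> 1 \<le> k \<and> k < n \<and>
     C i k = C i (k-1) \<and> C i (Suc k) = C i k + 1 \<and> C i k = C (i-1) k \<and> C (Suc i) k = C i k + 1
     \<and> C i k < C' i k"
proof -
  define S where "S = {(p,q). p \<le> n \<and> q \<le> n \<and> C p q < C' p q}"
  define N where "N = int (2*n+2)"
  define g where "g = (\<lambda>(p,q). N * C p q - int (p+q))"
  have "S \<subseteq> {0..n} \<times> {0..n}" unfolding S_def by auto
  then have fin: "finite S" by (rule finite_subset) simp
  have ne: "S \<noteq> {}" using ex unfolding S_def by auto
  have "Min (g ` S) \<in> g ` S" using fin ne by simp
  then obtain x where x: "x \<in> S" "g x = Min (g ` S)" by auto
  have mn: "g x \<le> g y" if "y \<in> S" for y using x fin that by simp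
  obtain i k where ik: "x = (i,k)" by fastforce
  have ikS: "i \<le> n" "k \<le> n" "C i k < C' i k" using x ik unfolding S_def by auto
  have R: "\<forall>p\<in>{1..n}. \<forall>q\<in>{0..n}. C p q - C (p-1) q \<in> {0,1}"
    and Cl: "\<forall>p\<in>{0..n}. \<forall>q\<in>{1..n}. C p q - C p (q-1) \<in> {0,1}"
    using v unfolding valid_def by blast+
  have R': "\<forall>p\<in>{1..n}. \<forall>q\<in>{0..n}. C' p q - C' (p-1) q \<in> {0,1}"
    and Cl': "\<forall>p\<in>{0..n}. \<forall>q\<in>{1..n}. C' p q - C' p (q-1) \<in> {0,1}"
    using v' unfolding valid_def by blast+
  have i1: "1 \<le> i" using ikS v v' unfolding valid_def by (cases i) auto
  have k1: "1 \<le> k" using ikS v v' unfolding valid_def by (cases k) auto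
  have in': "i < n" using ikS v v' unfolding valid_def by (cases "i = n") auto
  have kn: "k < n" using ikS v v' unfolding valid_def by (cases "k = n") auto
  have N2: "N \<ge> 2" unfolding N_def by simp
  have e1: "C i k = C i (k-1)"
  proof (rule ccontr)
    assume "C i k \<noteq> C i (k-1)"
    then have h: "C i (k-1) = C i k - 1" using Cl i1 k1 ikS by force
    have "C' i k - C' i (k-1) \<in> {0,1}" using Cl' i1 k1 ikS by force
    then have "(i, k-1) \<in> S" using h ikS unfolding S_def by auto
    then have "g (i,k) \<le> g (i,k-1)" using mn ik by simp
    moreover have "int (i + (k-1)) = int (i+k) - 1" using k1 by simp
    moreover have "N * C i (k-1) = N * C i k - N" by (subst h) (simp add: right_diff_distrib)
    moreover have "g (i,k-1) = N * C i (k-1) - int (i+(k-1))" "g (i,k) = N * C i k - int (i+k)"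
      by (simp_all add: g_def)
    ultimately show False using N2 by linarith
  qed
  have e2: "C i (Suc k) = C i k + 1"
  proof (rule ccontr)
    assume "C i (Suc k) \<noteq> C i k + 1"
    then have h: "C i (Suc k) = C i k" using Cl kn ikS by force
    have "C' i (Suc k) - C' i k \<in> {0,1}" using Cl' kn ikS by force
    then have "(i, Suc k) \<in> S" using h ikS kn unfolding S_def by auto
    then have "g (i,k) \<le> g (i,Suc k)" using mn ik by simp
    then show False using h unfolding g_def by simp
  qed
  have e3: "C i k = C (i-1) k"
  proof (rule ccontr)
    assume "C i k \<noteq> C (i-1) k"
    then have h: "C (i-1) k = C i k - 1" using R i1 k1 ikS by force
    have "C' i k - C' (i-1) k \<in> {0,1}" using R' i1 ikS by force
    then have "(i-1, k) \<in> S" using h ikS unfolding S_def by auto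
    then have "g (i,k) \<le> g (i-1,k)" using mn ik by simp
    moreover have "int ((i-1) + k) = int (i+k) - 1" using i1 by simp
    moreover have "N * C (i-1) k = N * C i k - N" by (subst h) (simp add: right_diff_distrib)
    moreover have "g (i-1,k) = N * C (i-1) k - int ((i-1)+k)" "g (i,k) = N * C i k - int (i+k)"
      by (simp_all add: g_def)
    ultimately show False using N2 by linarith
  qed
  have e4: "C (Suc i) k = C i k + 1"
  proof (rule ccontr)
    assume "C (Suc i) k \<noteq> C i k + 1"
    then have h: "C (Suc i) k = C i k" using R in' ikS by force
    have "C' (Suc i) k - C' i k \<in> {0,1}" using R' in' ikS by force
    then have "(Suc i, k) \<in> S" using h ikS in' unfolding S_def by auto
    then have "g (i,k) \<le> g (Suc i, k)" using mn ik by simp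
    then show False using h unfolding g_def by simp
  qed
  show ?thesis using i1 k1 in' kn e1 e2 e3 e4 ikS by blast
qed


lemma rop_point:
  assumes B: "asm n B" and e: "ess_point n B i k"
  shows "rop n i (Suc i) k (Suc k) B = mk n (\<lambda>p q. csum B p q + pt i k p q)"
    and "valid n (\<lambda>p q. csum B p q + pt i k p q)"
proof -
  define C where "C = (\<lambda>p q. csum B p q + pt i k p q)"
  have vB: "valid n (csum B)" using B by (rule asm_valid)
  show vc: "valid n (\<lambda>p q. csum B p q + pt i k p q)"
    using e unfolding ess_point_iff by (intro valid_add[OF vB]) auto
  then have vC: "valid n C" unfolding C_def .
  have er: "ess_rect n B i (Suc i) k (Suc k)" using e by (simp add: ess_point_def)
  have P: "asm n (mk n C) \<and> (\<forall>p\<in>{0..n}. \<forall>q\<in>{0..n}. csum (mk n C) p q = csum B p q + rect_ind i (Suc i) k (Suc k) p q)"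
    using mk_asm[OF vC] csum_mk[OF vC] by (simp add: rect_pt C_def)
  have "(THE B'. asm n B' \<and> (\<forall>p\<in>{0..n}. \<forall>q\<in>{0..n}. csum B' p q = csum B p q + rect_ind i (Suc i) k (Suc k) p q)) = mk n C"
  proof (rule the_equality)
    show "asm n (mk n C) \<and> (\<forall>p\<in>{0..n}. \<forall>q\<in>{0..n}. csum (mk n C) p q = csum B p q + rect_ind i (Suc i) k (Suc k) p q)" by (rule P)
  next
    fix B' assume h: "asm n B' \<and> (\<forall>p\<in>{0..n}. \<forall>q\<in>{0..n}. csum B' p q = csum B p q + rect_ind i (Suc i) k (Suc k) p q)"
    show "B' = mk n C" using h P by (intro asm_unique[of n]) auto
  qed
  then show "rop n i (Suc i) k (Suc k) B = mk n (\<lambda>p q. csum B p q + pt i k p q)"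
    using er unfolding rop_def C_def by simp
qed

lemma rop_csum:
  assumes B: "asm n B" and e: "ess_point n B i k" and "p \<le> n" "q \<le> n"
  shows "csum (rop n i (Suc i) k (Suc k) B) p q = csum B p q + pt i k p q"
  using rop_point[OF B e] csum_mk assms by simp

lemma rop_asm:
  assumes B: "asm n B" and e: "ess_point n B i k"
  shows "asm n (rop n i (Suc i) k (Suc k) B)"
  using rop_point[OF B e] mk_asm by simp

lemma rop_cover:
  assumes B: "asm n B" and e: "ess_point n B i k"
  shows "asm_covers n (rop n i (Suc i) k (Suc k) B) B"
proof -
  define A where "A = rop n i (Suc i) k (Suc k) B"
  have aA: "asm n A" unfolding A_def by (rule rop_asm[OF B e])
  have cA: "\<And>p q. p \<le> n \<Longrightarrow> q \<le> n \<Longrightarrow> csum A p q = csum B p q + pt i k p q"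
    unfolding A_def by (rule rop_csum[OF B e])
  have b: "1 \<le> i" "i < n" "1 \<le> k" "k < n" using e unfolding ess_point_iff by auto
  have le: "asm_le n A B" unfolding asm_le_def using aA B cA by (auto simp: pt_def)
  have ne: "A \<noteq> B"
  proof
    assume "A = B"
    then show False using cA[of i k] b by (simp add: pt_def)
  qed
  have nb: "\<not> (\<exists>C. asm_le n A C \<and> asm_le n C B \<and> C \<noteq> A \<and> C \<noteq> B)"
  proof
    assume "\<exists>C. asm_le n A C \<and> asm_le n C B \<and> C \<noteq> A \<and> C \<noteq> B"
    then obtain C where C: "asm_le n A C" "asm_le n C B" "C \<noteq> A" "C \<noteq> B" by blast
    have aC: "asm n C" using C unfolding asm_le_def by auto
    have lo: "\<forall>p\<le>n. \<forall>q\<le>n. csum B p q \<le> csum C p q" using C(2) unfolding asm_le_def by auto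
    have hi: "\<forall>p\<le>n. \<forall>q\<le>n. csum C p q \<le> csum B p q + pt i k p q"
      using C(1) cA unfolding asm_le_def by auto
    show False
    proof (cases "csum C i k = csum B i k")
      case True
      have "\<forall>p\<le>n. \<forall>q\<le>n. csum C p q = csum B p q"
      proof (intro allI impI)
        fix p q assume "p \<le> n" "q \<le> n"
        then show "csum C p q = csum B p q" using lo[rule_format, of p q] hi[rule_format, of p q] True
          by (cases "p = i \<and> q = k") (auto simp: pt_def)
      qed
      then have "C = B" using asm_unique[OF aC B] by blast
      then show False using C by simp
    next
      case False
      have "\<forall>p\<le>n. \<forall>q\<le>n. csum C p q = csum A p q"
      proof (intro allI impI)
        fix p q assume pq: "p \<le> n" "q \<le> n"
        then show "csum C p q = csum A p q" using lo[rule_format, of p q] hi[rule_format, of p q] False cA[OF pq] lo[rule_format, of i k] hi[rule_format, of i k]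
          by (cases "p = i \<and> q = k") (auto simp: pt_def)
      qed
      then have "C = A" using asm_unique[OF aC aA] by blast
      then show False using C by simp
    qed
  qed
  show ?thesis unfolding asm_covers_def A_def[symmetric] using le ne nb by blast
qed

theorem mainTheorem7:
  fixes n :: nat and B :: "nat \<Rightarrow> nat \<Rightarrow> int"
  assumes "asm n B"
  shows "bij_betw (\<lambda>(i, k). rop n i (Suc i) k (Suc k) B)
           {(i, k). ess_point n B i k} {A. asm_covers n A B}
         \<and> (\<forall>A. asm_covers n A B \<longrightarrow> asm_edge n A B)"
proof -
  note B = assms
  have vB: "valid n (csum B)" using B by (rule asm_valid)
  have surj: "\<exists>i k. ess_point n B i k \<and> A = rop n i (Suc i) k (Suc k) B"
    if cov: "asm_covers n A B" for A
  proof -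
    have aA: "asm n A" and le: "\<forall>p\<le>n. \<forall>q\<le>n. csum B p q \<le> csum A p q" and ne: "A \<noteq> B"
      and nb: "\<not> (\<exists>C. asm_le n A C \<and> asm_le n C B \<and> C \<noteq> A \<and> C \<noteq> B)"
      using cov unfolding asm_covers_def asm_le_def by auto
    have ex: "\<exists>p\<le>n. \<exists>q\<le>n. csum B p q < csum A p q"
    proof (rule ccontr)
      assume "\<not> ?thesis"
      then have "\<forall>p\<le>n. \<forall>q\<le>n. csum A p q = csum B p q" using le by force
      then have "A = B" using asm_unique[OF aA B] by blast
      then show False using ne by simp
    qed
    obtain i k where ik: "1 \<le> i \<and> i < n \<and> 1 \<le> k \<and> k < n \<and>
     csum B i k = csum B i (k-1) \<and> csum B i (Suc k) = csum B i k + 1 \<and> csum B i k = csum B (i-1) k \<and> csum B (Suc i) k = csum B i k + 1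
     \<and> csum B i k < csum A i k"
      using find_ess[OF vB asm_valid[OF aA] le ex] by blast
    have e: "ess_point n B i k" using ik unfolding ess_point_iff by auto
    define A' where "A' = rop n i (Suc i) k (Suc k) B"
    have cv: "asm_covers n A' B" unfolding A'_def by (rule rop_cover[OF B e])
    have cA': "\<And>p q. p \<le> n \<Longrightarrow> q \<le> n \<Longrightarrow> csum A' p q = csum B p q + pt i k p q"
      unfolding A'_def by (rule rop_csum[OF B e])
    have l1: "asm_le n A A'" unfolding asm_le_def
      using aA rop_asm[OF B e] cA' le ik by (auto simp: A'_def pt_def)
    have l2: "asm_le n A' B" and ne2: "A' \<noteq> B" using cv unfolding asm_covers_def by auto
    have "A' = A" using nb l1 l2 ne2 by blast
    then show ?thesis using e A'_def by blast
  qed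
  have bij: "bij_betw (\<lambda>(i, k). rop n i (Suc i) k (Suc k) B)
           {(i, k). ess_point n B i k} {A. asm_covers n A B}"
    unfolding bij_betw_def
  proof
    show "inj_on (\<lambda>(i, k). rop n i (Suc i) k (Suc k) B) {(i, k). ess_point n B i k}"
    proof (rule inj_onI, clarify)
      fix i k i' k'
      assume e: "ess_point n B i k" and e': "ess_point n B i' k'"
        and eq: "rop n i (Suc i) k (Suc k) B = rop n i' (Suc i') k' (Suc k') B"
      have b: "i \<le> n" "k \<le> n" using e unfolding ess_point_iff by auto
      have "csum B i k + pt i k i k = csum B i k + pt i' k' i k"
        using rop_csum[OF B e b] rop_csum[OF B e' b] eq by simp
      then show "i = i' \<and> k = k'" by (auto simp: pt_def split: if_splits)
    qed
  next
    show "(\<lambda>(i, k). rop n i (Suc i) k (Suc k) B) ` {(i, k). ess_point n B i k} = {A. asm_covers n A B}"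
      using rop_cover[OF B] surj by fastforce
  qed
  have edge: "asm_edge n A B" if cov: "asm_covers n A B" for A
  proof -
    obtain i k where e: "ess_point n B i k" and A: "A = rop n i (Suc i) k (Suc k) B"
      using surj[OF cov] by blast
    have aA: "asm n A" using A rop_asm[OF B e] by simp
    have cA: "\<And>p q. p \<le> n \<Longrightarrow> q \<le> n \<Longrightarrow> csum A p q = csum B p q + pt i k p q"
      using A rop_csum[OF B e] by simp
    have eb: "1 \<le> i \<and> i < n \<and> 1 \<le> k \<and> k < n \<and>
      csum B i k = csum B i (k-1) \<and> csum B i (Suc k) = csum B i k + 1 \<and>
      csum B i k = csum B (i-1) k \<and> csum B (Suc i) k = csum B i k + 1"
      using e unfolding ess_point_iff .
    have vr: "valid_rect n i (Suc i) k (Suc k)" using eb unfolding valid_rect_def by auto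
    have c1: "csum A i k = csum B i k + 1" "csum A i (k-1) = csum B i (k-1)"
      "csum A i (Suc k) = csum B i (Suc k)" "csum A (i-1) k = csum B (i-1) k"
      "csum A (Suc i) k = csum B (Suc i) k"
      using cA[of i k] cA[of i "k-1"] cA[of i "Suc k"] cA[of "i-1" k] cA[of "Suc i" k] eb
      by (auto simp: pt_def)
    have ne: "\<not> ess_rect n A i (Suc i) k (Suc k)"
      using c1 eb unfolding ess_point_def[symmetric] ess_point_iff by auto
    have de: "dual_ess_rect n A i (Suc i) k (Suc k)"
      using c1 eb unfolding dual_point_iff by auto
    have "(THE B'. asm n B' \<and> (\<forall>p\<in>{0..n}. \<forall>q\<in>{0..n}. csum B' p q = csum A p q - rect_ind i (Suc i) k (Suc k) p q)) = B"
    proof (rule the_equality)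
      show "asm n B \<and> (\<forall>p\<in>{0..n}. \<forall>q\<in>{0..n}. csum B p q = csum A p q - rect_ind i (Suc i) k (Suc k) p q)"
        using B cA by (simp add: rect_pt)
    next
      fix B' assume h: "asm n B' \<and> (\<forall>p\<in>{0..n}. \<forall>q\<in>{0..n}. csum B' p q = csum A p q - rect_ind i (Suc i) k (Suc k) p q)"
      show "B' = B" using h B cA by (intro asm_unique[of n]) (auto simp: rect_pt)
    qed
    then have rb: "B = rop n i (Suc i) k (Suc k) A" using ne de unfolding rop_def by simp
    have "(\<Sum>p=1..n. \<Sum>q=1..n. csum A p q) = (\<Sum>p=1..n. \<Sum>q=1..n. csum B p q + pt i k p q)"
      using cA by (intro sum.cong) auto
    also have "\<dots> = (\<Sum>p=1..n. \<Sum>q=1..n. csum B p q) + (\<Sum>p=1..n. \<Sum>q=1..n. pt i k p q)"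
      by (simp add: sum.distrib)
    also have "\<dots> = (\<Sum>p=1..n. \<Sum>q=1..n. csum B p q) + 1" using eb by (subst sum_pt) auto
    finally have "beta n A < beta n B" unfolding beta_def by simp
    then show ?thesis unfolding asm_edge_def using aA B vr rb by blast
  qed
  show ?thesis using bij edge by blast
qed

end
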